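(* Let $p<1$, $p\neq0$. For $t\in[0,T]$ and $n\in\mathbb N$ let $\mathcal O^n_t=\{x\in\mathbb{R}^d:x^Tz\ge-1+\frac1n\ \forall z\in\mathbf S_t\}$ and define on $\mathbf S_t\times\mathcal O^n_t$ \[ \mathcal I(z,x)=\begin{cases}\dfrac{p^{-1}((1+x^Tz)^p-1)-x^Tz}{|z|^{2-\varepsilon}\wedge1},&|z|>0,\\ 0,&z=0.\end{cases} \] Then $\mathcal I$ is continuous, and there is a constant $C(n,\kappa_t)<\infty$ (depending on $n$ and $\kappa_t$) such that $\sup_{x\in\mathcal O^n_t}\sup_{z\ne\hat z\in\mathbf S_t}|\mathcal I(z,x)-\mathcal I(\hat z,x)|\le C(n,\kappa_t)|z-\hat z|^{\varepsilon\wedge1}$, $\sup_{z\in\mathbf S_t}\sup_{x\ne\hat x\in\mathcal O^n_t}|\mathcal I(z,x)-\mathcal I(z,\hat x)|\le C(n,\kappa_t)|x-\hat x|$, and $\sup_{(z,x)\in\mathbf S_t\times\mathcal O^n_t}|\mathcal I(z,x)|\le C(n,\kappa_t)$.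
   Context: Fix $T>0$, $d\ge1$, $\varepsilon\in(0,2]$. Let $\mathbb{S}^d_+$ be the symmetric positive definite $d\times d$ matrices, $\mathcal L$ the Lévy measures on $\mathbb{R}^d$, with $d^\varepsilon_{\mathcal L}(\mu,\nu)=\sup\int f\,d(\tilde\mu-\tilde\nu)$, $\tilde\mu(A)=\int_A(|z|^{2-\varepsilon}\wedge1)\mu(dz)$, sup over bounded continuous $f$ with $\sup_{z\neq\hat z}[|f(z)|\vee|f(z)-f(\hat z)|/|z-\hat z|^{\varepsilon\wedge1}]\le1$. $\mathcal C\subset\mathbb{R}^d\times\mathbb{S}^d_+\times\mathcal L$ is compact for $d_{\mathcal C}=|y-\hat y|\vee\|M-\hat M\|_2\vee d^\varepsilon_{\mathcal L}(\mu,\hat\mu)$; $\Theta:[0,T]\twoheadrightarrow\mathcal C$ is a weakly measurable correspondence with closed convex values. Assume $\mathbf S_t=\bigcup_{(y,M,\mu)\in\Theta_t}\mathrm{supp}(\mu)$ is closed, there is $\kappa_t>0$ with $\{|z|\le\kappa_t^{-1}\}\subseteq\mathrm{Conv}(\mathbf S_t\cup\{0\})\subseteq\{|z|\le\kappa_t\}$, and $|y|\vee\|M\|_2\vee d^\varepsilon_{\mathcal L}(\mu,0)\le\kappa_t$ for all $(y,M,\mu)\in\Theta_t$. *)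

theory Defs
  imports "HOL-Analysis.Analysis"
begin

definition Oset :: "'a::euclidean_space set \<Rightarrow> nat \<Rightarrow> 'a set" where
  "Oset S n = {x. \<forall>z\<in>S. inner x z \<ge> -1 + 1 / real n}"

text \<open>The integrand I(z,x); on S x O^n we have 1 + x^T z >= 1/n > 0.\<close>
definition Ifun :: "real \<Rightarrow> real \<Rightarrow> 'a::euclidean_space \<Rightarrow> 'a \<Rightarrow> real" where
  "Ifun p \<epsilon> z x =
     (if z = 0 then 0
      else (((1 + inner x z) powr p - 1) / p - inner x z) / min (norm z powr (2 - \<epsilon>)) 1)"

end

theory Submission
  imports Defs
begin


lemma mvt_abs:
  fixes g g' :: "real \<Rightarrow> real"
  assumes der: "\<And>s. min a b \<le> s \<Longrightarrow> s \<le> max a b \<Longrightarrow> (g has_real_derivative g' s) (at s)"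
    and bd: "\<And>s. min a b \<le> s \<Longrightarrow> s \<le> max a b \<Longrightarrow> \<bar>g' s\<bar> \<le> M"
  shows "\<bar>g b - g a\<bar> \<le> M * \<bar>b - a\<bar>"
proof (cases "a = b")
  case True then show ?thesis by simp
next
  case False
  show ?thesis
  proof (cases "a < b")
    case True
    obtain z where z: "a < z" "z < b" "g b - g a = (b - a) * g' z"
      using MVT2[OF True, of g g'] der True by force
    have "\<bar>g' z\<bar> \<le> M" using bd z True by auto
    then show ?thesis using z True by (simp add: abs_mult mult.commute mult_right_mono)
  next
    case False
    then have ba: "b < a" using \<open>a \<noteq> b\<close> by auto
    obtain z where z: "b < z" "z < a" "g a - g b = (a - b) * g' z"
      using MVT2[OF ba, of g g'] der ba by force
    have "\<bar>g' z\<bar> \<le> M" using bd z ba by auto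
    then show ?thesis using z ba by (simp add: abs_mult mult.commute mult_right_mono abs_minus_commute)
  qed
qed

definition ff :: "real \<Rightarrow> real \<Rightarrow> real" where
  "ff p u = ((1 + u) powr p - 1) / p - u"

definition DD :: "real \<Rightarrow> nat \<Rightarrow> real" where
  "DD p n = (1 - p) * real n powr (2 - p)"

lemma fd_bound:
  assumes p: "p < 1" and n: "n \<ge> 1" and t: "1 / real n \<le> 1 + t"
  shows "\<bar>(1 + t) powr (p - 1) - 1\<bar> \<le> DD p n * \<bar>t\<bar>"
proof -
  have n0: "real n > 0" using n by simp
  have inv: "1 / real n \<le> 1" using n by simp
  have "\<bar>(1 + t) powr (p - 1) - (1 + 0) powr (p - 1)\<bar> \<le> DD p n * \<bar>t - 0\<bar>"
  proof (rule mvt_abs[where g' = "\<lambda>s. (p - 1) * (1 + s) powr (p - 2)"])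
    fix s assume s: "min 0 t \<le> s" "s \<le> max 0 t"
    have s1: "1 / real n \<le> 1 + s" using s t inv by (auto simp: min_def max_def split: if_splits)
    have pos: "0 < 1 + s" using s1 n0 by (smt (verit) divide_pos_pos)
    show "((\<lambda>s. (1 + s) powr (p - 1)) has_real_derivative (p - 1) * (1 + s) powr (p - 2)) (at s)"
      using pos by (auto intro!: derivative_eq_intros simp: field_simps)
    have "(1 + s) powr (p - 2) \<le> (1 / real n) powr (p - 2)"
      by (rule powr_mono2') (use p n0 s1 in auto)
    also have "\<dots> = real n powr (2 - p)"
      using n0 by (simp add: powr_divide powr_minus[of "real n" "p - 2", simplified] divide_inverse inverse_powr)
    finally have "(1 + s) powr (p - 2) \<le> real n powr (2 - p)" .
    then show "\<bar>(p - 1) * (1 + s) powr (p - 2)\<bar> \<le> DD p n"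
      using p unfolding DD_def by (simp add: abs_mult mult_left_mono)
  qed
  then show ?thesis by simp
qed

lemma ff_deriv:
  assumes "p \<noteq> 0" "0 < 1 + s"
  shows "(ff p has_real_derivative (1 + s) powr (p - 1) - 1) (at s)"
  unfolding ff_def[abs_def] using assms
  by (auto intro!: derivative_eq_intros simp: field_simps)

lemma ff_lip:
  assumes p: "p < 1" "p \<noteq> 0" and n: "n \<ge> 1" and u: "1 / real n \<le> 1 + u" and v: "1 / real n \<le> 1 + v"
  shows "\<bar>ff p v - ff p u\<bar> \<le> DD p n * max \<bar>u\<bar> \<bar>v\<bar> * \<bar>v - u\<bar>"
proof (rule mvt_abs[where g' = "\<lambda>s. (1 + s) powr (p - 1) - 1"])
  have n0: "real n > 0" using n by simp
  fix s assume s: "min u v \<le> s" "s \<le> max u v"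
  have s1: "1 / real n \<le> 1 + s" using s u v by (auto simp: min_def max_def split: if_splits)
  have pos: "0 < 1 + s" using s1 n0 by (smt (verit) divide_pos_pos)
  show "(ff p has_real_derivative (1 + s) powr (p - 1) - 1) (at s)" by (rule ff_deriv) (use p pos in auto)
  have "\<bar>(1 + s) powr (p - 1) - 1\<bar> \<le> DD p n * \<bar>s\<bar>" by (rule fd_bound) (use p n s1 in auto)
  also have "\<dots> \<le> DD p n * max \<bar>u\<bar> \<bar>v\<bar>"
    apply (rule mult_left_mono)
    using s p n0 by (auto simp: DD_def)
  finally show "\<bar>(1 + s) powr (p - 1) - 1\<bar> \<le> DD p n * max \<bar>u\<bar> \<bar>v\<bar>" .
qed

lemma ff_zero[simp]: "ff p 0 = 0" by (simp add: ff_def)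

lemma ff_sq:
  assumes p: "p < 1" "p \<noteq> 0" and n: "n \<ge> 1" and u: "1 / real n \<le> 1 + u"
  shows "\<bar>ff p u\<bar> \<le> DD p n * u^2"
proof -
  have n0: "real n > 0" using n by simp
  have "\<bar>ff p u - ff p 0\<bar> \<le> DD p n * max \<bar>0\<bar> \<bar>u\<bar> * \<bar>u - 0\<bar>"
    by (rule ff_lip) (use p n u n0 in auto)
  then show ?thesis by (simp add: power2_eq_square abs_mult_self_eq)
qed

lemma ff_nonpos:
  assumes p: "p < 1" "p \<noteq> 0" and u: "0 < 1 + u"
  shows "ff p u \<le> 0"
proof -
  have der: "\<And>s. min 0 u \<le> s \<Longrightarrow> s \<le> max 0 u \<Longrightarrow> (ff p has_real_derivative (1 + s) powr (p - 1) - 1) (at s)"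
    using u p by (intro ff_deriv) (auto simp: min_def max_def split: if_splits)
  consider "u = 0" | "0 < u" | "u < 0" by linarith
  then show ?thesis
  proof cases
    case 1 then show ?thesis by simp
  next
    case 2
    obtain z where z: "0 < z" "z < u" "ff p u - ff p 0 = (u - 0) * ((1 + z) powr (p - 1) - 1)"
      using MVT2[OF 2, of "ff p" "\<lambda>s. (1 + s) powr (p - 1) - 1"] der 2 by force
    have "(1 + z) powr (p - 1) \<le> 1 powr (p - 1)" by (rule powr_mono2') (use p z in auto)
    then show ?thesis using z 2 by (simp add: mult_nonneg_nonpos)
  next
    case 3
    obtain z where z: "u < z" "z < 0" "ff p 0 - ff p u = (0 - u) * ((1 + z) powr (p - 1) - 1)"
      using MVT2[OF 3, of "ff p" "\<lambda>s. (1 + s) powr (p - 1) - 1"] der 3 by force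
    have "1 powr (p - 1) \<le> (1 + z) powr (p - 1)" by (rule powr_mono2') (use p z u in auto)
    then show ?thesis using z 3 by (simp add: mult_nonpos_nonneg)
  qed
qed

lemma rpow_diff:
  fixes \<epsilon> r r' :: real
  assumes e: "0 < \<epsilon>" "\<epsilon> \<le> 2" and r: "r / 2 < r'" "r' \<le> r"
  shows "\<bar>r powr (\<epsilon> - 2) - r' powr (\<epsilon> - 2)\<bar> \<le> 16 * r powr (\<epsilon> - 3) * \<bar>r - r'\<bar>"
proof (rule mvt_abs[where g' = "\<lambda>s. (\<epsilon> - 2) * s powr (\<epsilon> - 3)"])
  fix s assume s: "min r' r \<le> s" "s \<le> max r' r"
  have rp: "r > 0" using r by linarith
  have s2: "r / 2 < s" using s r by (auto simp: min_def)
  have sp: "s > 0" using s2 rp by linarith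
  show "((\<lambda>s. s powr (\<epsilon> - 2)) has_real_derivative (\<epsilon> - 2) * s powr (\<epsilon> - 3)) (at s)"
    using has_real_derivative_powr[OF sp, of "\<epsilon> - 2"] by (simp add: algebra_simps)
  have "s powr (\<epsilon> - 3) \<le> (r / 2) powr (\<epsilon> - 3)"
    by (rule powr_mono2') (use e s2 rp in auto)
  also have "\<dots> = r powr (\<epsilon> - 3) / 2 powr (\<epsilon> - 3)" by (simp add: powr_divide rp)
  also have "\<dots> = r powr (\<epsilon> - 3) * 2 powr (3 - \<epsilon>)"
    by (simp add: powr_minus_divide[symmetric] divide_inverse powr_minus[of 2 "\<epsilon> - 3", simplified])
  also have "\<dots> \<le> r powr (\<epsilon> - 3) * 8"
  proof -
    have "2 powr (3 - \<epsilon>) \<le> 2 powr (3::real)" by (rule powr_mono) (use e in auto)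
    then show ?thesis by (intro mult_left_mono) auto
  qed
  finally have *: "s powr (\<epsilon> - 3) \<le> r powr (\<epsilon> - 3) * 8" .
  have "\<bar>(\<epsilon> - 2) * s powr (\<epsilon> - 3)\<bar> = (2 - \<epsilon>) * s powr (\<epsilon> - 3)" using e by (simp add: abs_mult)
  also have "\<dots> \<le> 2 * (r powr (\<epsilon> - 3) * 8)"
    by (rule mult_mono) (use e * in auto)
  finally show "\<bar>(\<epsilon> - 2) * s powr (\<epsilon> - 3)\<bar> \<le> 16 * r powr (\<epsilon> - 3)" by simp
qed

lemma le_mult_K: "1 \<le> (K::real) \<Longrightarrow> 0 \<le> y \<Longrightarrow> y \<le> K * y"
  using mult_right_mono[of 1 K y] by simp

lemma holder_L:
  fixes \<epsilon> \<delta> r K :: real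
  assumes e: "0 < \<epsilon>" "\<epsilon> \<le> 2" and d: "0 < \<delta>" "\<delta> < r" "r \<le> K" and K: "1 \<le> K"
  shows "r powr (\<epsilon> - 1) * \<delta> \<le> K * \<delta> powr (min \<epsilon> 1)"
proof (cases "1 \<le> \<epsilon>")
  case True
  have "r powr (\<epsilon> - 1) \<le> K"
  proof (cases "r \<le> 1")
    case True
    then have "r powr (\<epsilon> - 1) \<le> 1" using \<open>1 \<le> \<epsilon>\<close> d by (intro powr_le1) auto
    then show ?thesis using K by linarith
  next
    case False
    then have "r powr (\<epsilon> - 1) \<le> r powr 1" using \<open>1 \<le> \<epsilon>\<close> e by (intro powr_mono) auto
    then show ?thesis using d False by simp
  qed
  then show ?thesis using True d by (simp add: mult_right_mono)
next
  case False
  have "r powr (\<epsilon> - 1) * \<delta> = \<delta> powr \<epsilon> * (\<delta> powr (1 - \<epsilon>) * r powr (\<epsilon> - 1))"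
    using d by (simp add: powr_add[symmetric])
  also have "\<dots> \<le> \<delta> powr \<epsilon> * (r powr (1 - \<epsilon>) * r powr (\<epsilon> - 1))"
    using False d by (intro mult_left_mono mult_right_mono powr_mono2) auto
  also have "\<dots> = \<delta> powr \<epsilon>" using d by (simp add: powr_add[symmetric])
  also have "\<dots> \<le> K * \<delta> powr \<epsilon>" using K by (simp add: le_mult_K)
  finally show ?thesis using False by simp
qed

lemma holder_P3a:
  fixes \<epsilon> \<delta> R :: real
  assumes e: "0 < \<epsilon>" "\<epsilon> \<le> 2" and d: "0 \<le> \<delta>" "\<delta> \<le> R" and R: "1 \<le> R"
  shows "\<delta> powr \<epsilon> \<le> R * \<delta> powr (min \<epsilon> 1)"
proof (cases "\<epsilon> \<le> 1")
  case True then show ?thesis using R by (simp add: le_mult_K)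
next
  case False
  have "\<delta> powr (\<epsilon> - 1) \<le> R"
  proof (cases "\<delta> \<le> 1")
    case True
    then have "\<delta> powr (\<epsilon> - 1) \<le> 1" using False d by (intro powr_le1) auto
    then show ?thesis using R by linarith
  next
    case c: False
    then have "\<delta> powr (\<epsilon> - 1) \<le> \<delta> powr 1" using False e by (intro powr_mono) auto
    then show ?thesis using d c by simp
  qed
  moreover have "\<delta> powr \<epsilon> = \<delta> powr (\<epsilon> - 1) * \<delta>"
    using d powr_add[of \<delta> "\<epsilon> - 1" 1] by (cases "\<delta> = 0") auto
  ultimately show ?thesis using False d by (simp add: mult_right_mono)
qed

lemma holder_P3b:
  fixes \<epsilon> \<delta> R :: real
  assumes e: "0 < \<epsilon>" and d: "0 \<le> \<delta>" "\<delta> \<le> R" and R: "1 \<le> R"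
  shows "\<delta> \<le> R * \<delta> powr (min \<epsilon> 1)"
proof (cases "\<delta> \<le> 1")
  case True
  have "\<delta> powr 1 \<le> \<delta> powr (min \<epsilon> 1)" using True d by (intro powr_mono') auto
  moreover have "\<delta> powr (min \<epsilon> 1) \<le> R * \<delta> powr (min \<epsilon> 1)" using R by (simp add: le_mult_K)
  moreover have "\<delta> powr 1 = \<delta>" using d by (cases "\<delta> = 0") auto
  ultimately show ?thesis by linarith
next
  case False
  have "1 \<le> \<delta> powr (min \<epsilon> 1)" using False e by (intro ge_one_powr_ge_zero) auto
  then have "R \<le> R * \<delta> powr (min \<epsilon> 1)" using R by (simp add: mult_left_mono[of 1, simplified])
  then show ?thesis using d by linarith
qed



lemma DD_nonneg: "p < 1 \<Longrightarrow> 0 \<le> DD p n" by (simp add: DD_def)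

lemma Ifun_min:
  assumes p: "p < 1" "p \<noteq> 0" and u: "0 < 1 + inner x z"
  shows "Ifun p \<epsilon> z x = min (ff p (inner x z) * norm z powr (\<epsilon> - 2)) (ff p (inner x z))"
proof (cases "z = 0")
  case True then show ?thesis by (simp add: Ifun_def)
next
  case False
  define F where "F = ff p (inner x z)"
  define a where "a = norm z powr (2 - \<epsilon>)"
  have F0: "F \<le> 0" unfolding F_def by (rule ff_nonpos) (use p u in auto)
  have a0: "a > 0" using False by (simp add: a_def)
  have inv: "norm z powr (\<epsilon> - 2) = 1 / a"
    unfolding a_def using powr_minus_divide[of "norm z" "2 - \<epsilon>"] by simp
  have I: "Ifun p \<epsilon> z x = F / min a 1" using False by (simp add: Ifun_def F_def ff_def a_def)
  show ?thesis
  proof (cases "a \<le> 1")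
    case True
    have "1 \<le> 1 / a" using True a0 by simp
    then have "F * (1 / a) \<le> F * 1" using F0 by (intro mult_left_mono_neg) auto
    then show ?thesis using True I inv by (simp add: F_def[symmetric] min_def)
  next
    case False
    have "1 / a \<le> 1" using False a0 by simp
    then have "F * 1 \<le> F * (1 / a)" using F0 by (intro mult_left_mono_neg) auto
    then show ?thesis using False I inv by (simp add: F_def[symmetric] min_def)
  qed
qed

lemma h2_bound:
  assumes p: "p < 1" "p \<noteq> 0" and n: "n \<ge> 1" and u: "1 / real n \<le> 1 + inner x z"
    and x: "norm x \<le> K"
  shows "\<bar>ff p (inner x z) * norm z powr (\<epsilon> - 2)\<bar> \<le> DD p n * K^2 * norm z powr \<epsilon>"
proof (cases "z = 0")
  case True then show ?thesis by simp
next
  case False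
  have r: "norm z > 0" using False by simp
  have "\<bar>ff p (inner x z)\<bar> \<le> DD p n * (inner x z)^2" by (rule ff_sq) (use p n u in auto)
  also have "\<dots> \<le> DD p n * (K * norm z)^2"
  proof -
    have "\<bar>inner x z\<bar> \<le> K * norm z"
      using Cauchy_Schwarz_ineq2[of x z] x by (meson mult_right_mono norm_ge_zero order_trans)
    then have "(inner x z)^2 \<le> (K * norm z)^2" by (metis abs_ge_zero abs_le_square_iff abs_of_nonneg order_trans power2_abs)
    then show ?thesis using DD_nonneg[OF p(1)] by (intro mult_left_mono) auto
  qed
  finally have *: "\<bar>ff p (inner x z)\<bar> \<le> DD p n * (K * norm z)^2" .
  have "\<bar>ff p (inner x z) * norm z powr (\<epsilon> - 2)\<bar> = \<bar>ff p (inner x z)\<bar> * norm z powr (\<epsilon> - 2)"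
    by (simp add: abs_mult)
  also have "\<dots> \<le> DD p n * (K * norm z)^2 * norm z powr (\<epsilon> - 2)"
    using * by (intro mult_right_mono) auto
  also have "\<dots> = DD p n * K^2 * (norm z powr 2 * norm z powr (\<epsilon> - 2))"
    using r by (simp add: power_mult_distrib)
  also have "\<dots> = DD p n * K^2 * norm z powr \<epsilon>"
    using powr_add[of "norm z" 2 "\<epsilon> - 2"] by simp
  finally show ?thesis .
qed

lemma inner_bound:
  assumes "norm x \<le> K"
  shows "\<bar>inner x z\<bar> \<le> K * norm z"
  using Cauchy_Schwarz_ineq2[of x z] assms by (meson mult_right_mono norm_ge_zero order_trans)

lemma h2_holder_wlog:
  fixes x z z' :: "'a::euclidean_space"
  assumes p: "p < 1" "p \<noteq> 0" and n: "n \<ge> 1" and e: "0 < \<epsilon>" "\<epsilon> \<le> 2" and K: "1 \<le> K"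
    and nx: "norm x \<le> K" and nz: "norm z \<le> K" and nz': "norm z' \<le> K"
    and u: "1 / real n \<le> 1 + inner x z" and u': "1 / real n \<le> 1 + inner x z'"
    and le: "norm z' \<le> norm z"
  shows "\<bar>ff p (inner x z) * norm z powr (\<epsilon> - 2) - ff p (inner x z') * norm z' powr (\<epsilon> - 2)\<bar>
           \<le> 17 * DD p n * K^3 * dist z z' powr min \<epsilon> 1"
proof -
  define D where "D = DD p n"
  have D0: "0 \<le> D" using DD_nonneg[OF p(1)] by (simp add: D_def)
  define \<delta> where "\<delta> = dist z z'"
  define r where "r = norm z"
  define r' where "r' = norm z'"
  define \<alpha> where "\<alpha> = min \<epsilon> 1"
  have d0: "0 \<le> \<delta>" by (simp add: \<delta>_def)
  have tri: "r \<le> r' + \<delta>" unfolding r_def r'_def \<delta>_def dist_norm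
    by (metis add.commute norm_triangle_ineq4 diff_add_cancel norm_minus_commute norm_triangle_ineq)
  have tri2: "\<delta> \<le> r + r'" unfolding r_def r'_def \<delta>_def dist_norm by (rule norm_triangle_ineq4)
  have dK: "\<delta> \<le> 2 * K" using tri2 nz nz' r_def r'_def by simp
  have rr: "\<bar>r - r'\<bar> \<le> \<delta>" unfolding r_def r'_def \<delta>_def dist_norm by (rule norm_triangle_ineq3)
  show ?thesis
  proof (cases "\<delta> = 0")
    case True then show ?thesis by (simp add: \<delta>_def)
  next
    case dne: False
    then have dpos: "0 < \<delta>" using d0 by simp
    show ?thesis
    proof (cases "r \<le> 2 * \<delta>")
      case True
      have b1: "\<bar>ff p (inner x z) * norm z powr (\<epsilon> - 2)\<bar> \<le> D * K^2 * r powr \<epsilon>"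
        unfolding D_def r_def by (rule h2_bound) (use p n u nx in auto)
      have b2: "\<bar>ff p (inner x z') * norm z' powr (\<epsilon> - 2)\<bar> \<le> D * K^2 * r' powr \<epsilon>"
        unfolding D_def r'_def by (rule h2_bound) (use p n u' nx in auto)
      have "r' powr \<epsilon> \<le> r powr \<epsilon>" using le e by (intro powr_mono2) (auto simp: r_def r'_def)
      then have b2': "D * K^2 * r' powr \<epsilon> \<le> D * K^2 * r powr \<epsilon>" using D0 by (intro mult_left_mono) auto
      have "r powr \<epsilon> \<le> (2 * \<delta>) powr \<epsilon>" using True e by (intro powr_mono2) (auto simp: r_def)
      also have "\<dots> = 2 powr \<epsilon> * \<delta> powr \<epsilon>" by (simp add: powr_mult)
      also have "\<dots> \<le> 4 * \<delta> powr \<epsilon>"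
      proof -
        have "2 powr \<epsilon> \<le> 2 powr (2::real)" using e by (intro powr_mono) auto
        then show ?thesis by (intro mult_right_mono) auto
      qed
      also have "\<dots> \<le> 4 * (2 * K * \<delta> powr \<alpha>)"
        unfolding \<alpha>_def using holder_P3a[OF e d0 dK] K by (intro mult_left_mono) auto
      finally have rb: "r powr \<epsilon> \<le> 8 * K * \<delta> powr \<alpha>" by simp
      have "\<bar>ff p (inner x z) * norm z powr (\<epsilon> - 2) - ff p (inner x z') * norm z' powr (\<epsilon> - 2)\<bar>
          \<le> 2 * (D * K^2 * r powr \<epsilon>)" using b1 b2 b2' by linarith
      also have "\<dots> \<le> 2 * (D * K^2 * (8 * K * \<delta> powr \<alpha>))"
        using rb D0 by (intro mult_left_mono) auto
      also have "\<dots> = 16 * D * K^3 * \<delta> powr \<alpha>" by (simp add: power_numeral_reduce)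
      also have "\<dots> \<le> 17 * D * K^3 * \<delta> powr \<alpha>"
        using D0 K by (intro mult_right_mono) auto
      finally show ?thesis by (simp add: D_def \<delta>_def \<alpha>_def)
    next
      case False
      then have r2: "r / 2 < r'" using tri by linarith
      have rpos: "0 < r" using False d0 by linarith
      have r'pos: "0 < r'" using r2 rpos by linarith
      have rle: "r' \<le> r" using le by (simp add: r_def r'_def)
      define F where "F = ff p (inner x z)"
      define F' where "F' = ff p (inner x z')"
      have ub: "\<bar>inner x z\<bar> \<le> K * r" using inner_bound[OF nx] r_def by simp
      have ub': "\<bar>inner x z'\<bar> \<le> K * r"
        using inner_bound[OF nx, of z'] r'_def rle K by (smt (verit) mult_left_mono)
      have udiff: "\<bar>inner x z - inner x z'\<bar> \<le> K * \<delta>"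
        using inner_bound[OF nx, of "z - z'"] by (simp add: inner_diff_right \<delta>_def dist_norm)
      have "\<bar>F - F'\<bar> \<le> D * max \<bar>inner x z'\<bar> \<bar>inner x z\<bar> * \<bar>inner x z - inner x z'\<bar>"
        unfolding F_def F'_def D_def by (rule ff_lip) (use p n u u' in auto)
      also have "\<dots> \<le> D * (K * r) * (K * \<delta>)"
        using ub ub' udiff D0 by (intro mult_mono) auto
      finally have FF: "\<bar>F - F'\<bar> \<le> D * K^2 * r * \<delta>" by (simp add: power2_eq_square mult_ac)
      have "\<bar>F'\<bar> \<le> D * (inner x z')^2" unfolding F'_def D_def by (rule ff_sq) (use p n u' in auto)
      also have "\<dots> \<le> D * (K * r)^2"
        using ub' D0 by (intro mult_left_mono) (auto simp: abs_le_square_iff[symmetric])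
      finally have F'b: "\<bar>F'\<bar> \<le> D * K^2 * r^2" by (simp add: power_mult_distrib)
      have pd: "\<bar>r powr (\<epsilon> - 2) - r' powr (\<epsilon> - 2)\<bar> \<le> 16 * r powr (\<epsilon> - 3) * \<delta>"
      proof -
        have "\<bar>r powr (\<epsilon> - 2) - r' powr (\<epsilon> - 2)\<bar> \<le> 16 * r powr (\<epsilon> - 3) * \<bar>r - r'\<bar>"
          by (rule rpow_diff) (use e r2 rle in auto)
        also have "\<dots> \<le> 16 * r powr (\<epsilon> - 3) * \<delta>" using rr by (intro mult_left_mono) auto
        finally show ?thesis .
      qed
      have p1: "r * r powr (\<epsilon> - 2) = r powr (\<epsilon> - 1)"
        using powr_add[of r 1 "\<epsilon> - 2"] rpos by simp
      have p2: "r^2 * r powr (\<epsilon> - 3) = r powr (\<epsilon> - 1)"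
        using powr_add[of r 2 "\<epsilon> - 3"] rpos by simp
      have "\<bar>F * r powr (\<epsilon> - 2) - F' * r' powr (\<epsilon> - 2)\<bar>
           = \<bar>(F - F') * r powr (\<epsilon> - 2) + F' * (r powr (\<epsilon> - 2) - r' powr (\<epsilon> - 2))\<bar>"
        by (simp add: algebra_simps)
      also have "\<dots> \<le> \<bar>F - F'\<bar> * r powr (\<epsilon> - 2) + \<bar>F'\<bar> * \<bar>r powr (\<epsilon> - 2) - r' powr (\<epsilon> - 2)\<bar>"
        by (simp add: abs_mult abs_triangle_ineq[THEN order_trans])
      also have "\<dots> \<le> (D * K^2 * r * \<delta>) * r powr (\<epsilon> - 2) + (D * K^2 * r^2) * (16 * r powr (\<epsilon> - 3) * \<delta>)"
        using FF F'b pd by (intro add_mono mult_mono) auto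
      also have "\<dots> = 17 * D * K^2 * (r powr (\<epsilon> - 1) * \<delta>)"
        using p1 p2 by (simp add: algebra_simps)
      also have "\<dots> \<le> 17 * D * K^2 * (K * \<delta> powr \<alpha>)"
        unfolding \<alpha>_def using D0
        by (intro mult_left_mono holder_L) (use e dpos False nz r_def K in auto)
      finally show ?thesis by (simp add: F_def F'_def r_def r'_def D_def \<delta>_def \<alpha>_def power_numeral_reduce mult_ac)
    qed
  qed
qed

lemma r2m:
  fixes r K \<epsilon> :: real
  assumes r: "0 < r" "r \<le> K" and K: "1 \<le> K" and e: "0 < \<epsilon>" "\<epsilon> \<le> 2"
  shows "r^2 \<le> K^2 * min (r powr (2 - \<epsilon>)) 1"
proof (cases "r powr (2 - \<epsilon>) \<le> 1")
  case True
  have "r powr \<epsilon> \<le> K powr \<epsilon>" using r e by (intro powr_mono2) auto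
  also have "\<dots> \<le> K powr 2" using K e by (intro powr_mono) auto
  finally have a: "r powr \<epsilon> \<le> K^2" using K by simp
  have "r^2 = r powr \<epsilon> * r powr (2 - \<epsilon>)" using powr_add[of r \<epsilon> "2 - \<epsilon>"] r by simp
  also have "\<dots> \<le> K^2 * r powr (2 - \<epsilon>)" using a by (intro mult_right_mono) auto
  finally show ?thesis using True by (simp add: min_def)
next
  case False
  have "r^2 \<le> K^2" using r by (intro power_mono) auto
  then show ?thesis using False by (simp add: min_def)
qed

lemma Ifun_eq:
  assumes "z \<noteq> 0"
  shows "Ifun p \<epsilon> z x = ff p (inner x z) / min (norm z powr (2 - \<epsilon>)) 1"
  using assms by (simp add: Ifun_def ff_def)

lemma Ifun_bound:
  fixes x z :: "'a::euclidean_space"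
  assumes p: "p < 1" "p \<noteq> 0" and n: "n \<ge> 1" and e: "0 < \<epsilon>" "\<epsilon> \<le> 2" and K: "1 \<le> K"
    and nx: "norm x \<le> K" and nz: "norm z \<le> K"
    and u: "1 / real n \<le> 1 + inner x z"
  shows "\<bar>Ifun p \<epsilon> z x\<bar> \<le> DD p n * K^4"
proof (cases "z = 0")
  case True then show ?thesis using DD_nonneg[OF p(1)] K by (simp add: Ifun_def)
next
  case False
  define m where "m = min (norm z powr (2 - \<epsilon>)) 1"
  have m0: "0 < m" using False by (simp add: m_def)
  have rm: "(norm z)^2 \<le> K^2 * m" unfolding m_def by (rule r2m) (use False nz K e in auto)
  have "\<bar>ff p (inner x z)\<bar> \<le> DD p n * (inner x z)^2" by (rule ff_sq) (use p n u in auto)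
  also have "\<dots> \<le> DD p n * (K * norm z)^2"
    using inner_bound[OF nx, of z] DD_nonneg[OF p(1)]
    by (intro mult_left_mono) (auto simp: abs_le_square_iff[symmetric])
  also have "\<dots> = DD p n * K^2 * (norm z)^2" by (simp add: power_mult_distrib)
  also have "\<dots> \<le> DD p n * K^2 * (K^2 * m)"
    using rm DD_nonneg[OF p(1)] by (intro mult_left_mono) auto
  finally have "\<bar>ff p (inner x z)\<bar> \<le> DD p n * K^4 * m" by (simp add: power_numeral_reduce mult_ac)
  then show ?thesis using m0 False by (simp add: Ifun_eq m_def[symmetric] abs_divide pos_divide_le_eq)
qed

lemma Ifun_xlip:
  fixes x x' z :: "'a::euclidean_space"
  assumes p: "p < 1" "p \<noteq> 0" and n: "n \<ge> 1" and e: "0 < \<epsilon>" "\<epsilon> \<le> 2" and K: "1 \<le> K"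
    and nx: "norm x \<le> K" and nx': "norm x' \<le> K" and nz: "norm z \<le> K"
    and u: "1 / real n \<le> 1 + inner x z" and u': "1 / real n \<le> 1 + inner x' z"
  shows "\<bar>Ifun p \<epsilon> z x - Ifun p \<epsilon> z x'\<bar> \<le> DD p n * K^3 * dist x x'"
proof (cases "z = 0")
  case True then show ?thesis using DD_nonneg[OF p(1)] K by (simp add: Ifun_def)
next
  case False
  define D where "D = DD p n"
  have D0: "0 \<le> D" using DD_nonneg[OF p(1)] by (simp add: D_def)
  define m where "m = min (norm z powr (2 - \<epsilon>)) 1"
  have m0: "0 < m" using False by (simp add: m_def)
  have rm: "(norm z)^2 \<le> K^2 * m" unfolding m_def by (rule r2m) (use False nz K e in auto)
  have ub: "max \<bar>inner x' z\<bar> \<bar>inner x z\<bar> \<le> K * norm z"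
    using inner_bound[OF nx, of z] inner_bound[OF nx', of z] by simp
  have ud: "\<bar>inner x z - inner x' z\<bar> \<le> norm z * dist x x'"
    using Cauchy_Schwarz_ineq2[of "x - x'" z] by (simp add: inner_diff_left dist_norm mult.commute)
  have "\<bar>ff p (inner x z) - ff p (inner x' z)\<bar> \<le> D * max \<bar>inner x' z\<bar> \<bar>inner x z\<bar> * \<bar>inner x z - inner x' z\<bar>"
    unfolding D_def by (rule ff_lip) (use p n u u' in auto)
  also have "\<dots> \<le> D * (K * norm z) * (norm z * dist x x')"
    using ub ud D0 by (intro mult_mono) auto
  also have "\<dots> = D * K * dist x x' * (norm z)^2" by (simp add: power2_eq_square mult_ac)
  also have "\<dots> \<le> D * K * dist x x' * (K^2 * m)"
    using rm D0 K by (intro mult_left_mono) auto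
  finally have "\<bar>ff p (inner x z) - ff p (inner x' z)\<bar> \<le> D * K^3 * dist x x' * m"
    by (simp add: power_numeral_reduce mult_ac)
  then show ?thesis using m0 False
    by (simp add: Ifun_eq m_def[symmetric] D_def diff_divide_distrib[symmetric] abs_divide pos_divide_le_eq)
qed

lemma min_diff: "\<bar>min a b - min a' b'\<bar> \<le> \<bar>a - a'\<bar> + \<bar>b - b'\<bar>" for a b a' b' :: real
  by (auto simp: min_def)

lemma Ifun_zholder:
  fixes x z z' :: "'a::euclidean_space"
  assumes p: "p < 1" "p \<noteq> 0" and n: "n \<ge> 1" and e: "0 < \<epsilon>" "\<epsilon> \<le> 2" and K: "1 \<le> K"
    and nx: "norm x \<le> K" and nz: "norm z \<le> K" and nz': "norm z' \<le> K"
    and u: "1 / real n \<le> 1 + inner x z" and u': "1 / real n \<le> 1 + inner x z'"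
  shows "\<bar>Ifun p \<epsilon> z x - Ifun p \<epsilon> z' x\<bar> \<le> 19 * DD p n * K^4 * dist z z' powr min \<epsilon> 1"
proof -
  define D where "D = DD p n"
  have D0: "0 \<le> D" using DD_nonneg[OF p(1)] by (simp add: D_def)
  have n0: "0 < real n" using n by simp
  have pos: "0 < 1 + inner x z" "0 < 1 + inner x z'" using u u' n0
    by (smt (verit) divide_pos_pos)+
  define \<delta> where "\<delta> = dist z z'"
  define \<alpha> where "\<alpha> = min \<epsilon> 1"
  have d0: "0 \<le> \<delta>" by (simp add: \<delta>_def)
  have dK: "\<delta> \<le> 2 * K" using norm_triangle_ineq4[of z z'] nz nz' by (simp add: \<delta>_def dist_norm)
  have h2: "\<bar>ff p (inner x z) * norm z powr (\<epsilon> - 2) - ff p (inner x z') * norm z' powr (\<epsilon> - 2)\<bar>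
           \<le> 17 * D * K^3 * \<delta> powr \<alpha>"
  proof (cases "norm z' \<le> norm z")
    case True
    show ?thesis unfolding D_def \<delta>_def \<alpha>_def by (rule h2_holder_wlog) (use assms True in auto)
  next
    case False
    have "\<bar>ff p (inner x z') * norm z' powr (\<epsilon> - 2) - ff p (inner x z) * norm z powr (\<epsilon> - 2)\<bar>
           \<le> 17 * D * K^3 * dist z' z powr \<alpha>"
      unfolding D_def \<alpha>_def by (rule h2_holder_wlog) (use assms False in auto)
    then show ?thesis by (simp add: abs_minus_commute dist_commute \<delta>_def)
  qed
  have "17 * D * K^3 * \<delta> powr \<alpha> \<le> 17 * D * K^4 * \<delta> powr \<alpha>"
  proof -
    have "K^3 \<le> K^4" using K by (intro power_increasing) auto
    then show ?thesis using D0 by (intro mult_right_mono mult_left_mono) auto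
  qed
  with h2 have h2': "\<bar>ff p (inner x z) * norm z powr (\<epsilon> - 2) - ff p (inner x z') * norm z' powr (\<epsilon> - 2)\<bar>
           \<le> 17 * D * K^4 * \<delta> powr \<alpha>" by linarith
  have "\<bar>ff p (inner x z) - ff p (inner x z')\<bar> \<le> D * max \<bar>inner x z'\<bar> \<bar>inner x z\<bar> * \<bar>inner x z - inner x z'\<bar>"
    unfolding D_def by (rule ff_lip) (use p n u u' in auto)
  also have "\<dots> \<le> D * (K * K) * (K * \<delta>)"
  proof -
    have "max \<bar>inner x z'\<bar> \<bar>inner x z\<bar> \<le> K * K"
      using inner_bound[OF nx, of z] inner_bound[OF nx, of z'] nz nz' K
      by (smt (verit) mult_left_mono)
    moreover have "\<bar>inner x z - inner x z'\<bar> \<le> K * \<delta>"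
      using inner_bound[OF nx, of "z - z'"] by (simp add: inner_diff_right \<delta>_def dist_norm)
    ultimately show ?thesis using D0 by (intro mult_mono) auto
  qed
  also have "\<dots> = D * K^3 * \<delta>" by (simp add: power_numeral_reduce mult_ac)
  also have "\<dots> \<le> D * K^3 * (2 * K * \<delta> powr \<alpha>)"
    unfolding \<alpha>_def using D0 K holder_P3b[OF e(1) d0 dK] by (intro mult_left_mono) auto
  finally have h1: "\<bar>ff p (inner x z) - ff p (inner x z')\<bar> \<le> 2 * D * K^4 * \<delta> powr \<alpha>"
    by (simp add: power_numeral_reduce mult_ac)
  have "\<bar>Ifun p \<epsilon> z x - Ifun p \<epsilon> z' x\<bar> \<le> 17 * D * K^4 * \<delta> powr \<alpha> + 2 * D * K^4 * \<delta> powr \<alpha>"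
    unfolding Ifun_min[OF p pos(1)] Ifun_min[OF p pos(2)]
    using min_diff h1 h2' by (smt (verit))
  then show ?thesis by (simp add: D_def \<delta>_def \<alpha>_def algebra_simps)
qed

lemma cont_from_bounds:
  fixes f :: "'a::metric_space \<times> 'b::metric_space \<Rightarrow> real"
  assumes h1: "\<And>a b c. a \<in> A \<Longrightarrow> b \<in> A \<Longrightarrow> c \<in> B \<Longrightarrow> \<bar>f (a, c) - f (b, c)\<bar> \<le> C * dist a b powr \<alpha>"
    and h2: "\<And>a c c'. a \<in> A \<Longrightarrow> c \<in> B \<Longrightarrow> c' \<in> B \<Longrightarrow> \<bar>f (a, c) - f (a, c')\<bar> \<le> C * dist c c'"
    and al: "0 < \<alpha>" "\<alpha> \<le> 1" and C: "0 \<le> C"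
  shows "continuous_on (A \<times> B) f"
  unfolding continuous_on_iff
proof (intro ballI allI impI)
  fix y e assume y: "y \<in> A \<times> B" and e: "(0::real) < e"
  define q where "q = e / (2 * C + 1)"
  have q0: "0 < q" using e C by (simp add: q_def)
  define d where "d = min 1 (q powr (1 / \<alpha>))"
  have d0: "0 < d" using q0 by (simp add: d_def)
  have dq: "d powr \<alpha> \<le> q"
  proof -
    have "d powr \<alpha> \<le> (q powr (1 / \<alpha>)) powr \<alpha>" using d0 al by (intro powr_mono2) (auto simp: d_def)
    also have "\<dots> = q" using al q0 by (simp add: powr_powr)
    finally show ?thesis .
  qed
  show "\<exists>d>0. \<forall>y'\<in>A \<times> B. dist y' y < d \<longrightarrow> dist (f y') (f y) < e"
  proof (intro exI[of _ d] conjI ballI impI d0)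
    fix y' assume y': "y' \<in> A \<times> B" and dd: "dist y' y < d"
    obtain a c where ac: "y = (a, c)" "a \<in> A" "c \<in> B" using y by auto
    obtain a' c' where ac': "y' = (a', c')" "a' \<in> A" "c' \<in> B" using y' by auto
    have d1: "dist a' a < d" using dist_fst_le[of y' y] dd ac ac' by simp
    have d2: "dist c' c < d" using dist_snd_le[of y' y] dd ac ac' by simp
    have e1: "dist a' a powr \<alpha> \<le> q"
      using powr_mono2[of \<alpha> "dist a' a" d] d1 al dq by auto
    have "dist c' c \<le> dist c' c powr \<alpha>"
    proof (cases "dist c' c = 0")
      case True then show ?thesis by simp
    next
      case False
      have "dist c' c powr 1 \<le> dist c' c powr \<alpha>" using d2 al by (intro powr_mono') (auto simp: d_def)
      then show ?thesis using False by simp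
    qed
    also have "\<dots> \<le> q" using powr_mono2[of \<alpha> "dist c' c" d] d2 al dq by auto
    finally have e2: "dist c' c \<le> q" .
    have "\<bar>f (a', c') - f (a, c)\<bar> \<le> \<bar>f (a', c') - f (a, c')\<bar> + \<bar>f (a, c') - f (a, c)\<bar>" by linarith
    also have "\<dots> \<le> C * dist a' a powr \<alpha> + C * dist c' c"
      using h1[of a' a c'] h2[of a c' c] ac ac' by (intro add_mono) auto
    also have "\<dots> \<le> C * q + C * q" using e1 e2 C by (intro add_mono mult_left_mono) auto
    also have "\<dots> < e"
    proof -
      have "(2 * C + 1) * q = e" using C unfolding q_def by simp
      then show ?thesis using q0 by (simp add: algebra_simps)
    qed
    finally show "dist (f y') (f y) < e" using ac ac' by (simp add: dist_real_def)
  qed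
qed



theorem lemmaC1:
  fixes p \<epsilon> \<kappa> :: real and n :: nat
  assumes "p < 1" "p \<noteq> 0" "0 < \<epsilon>" "\<epsilon> \<le> 2" "n \<ge> 1" "\<kappa> > 0"
  shows "\<exists>C::real. \<forall>S :: 'a::euclidean_space set.
     closed S \<and> cball 0 (1 / \<kappa>) \<subseteq> convex hull (S \<union> {0})
       \<and> convex hull (S \<union> {0}) \<subseteq> cball 0 \<kappa> \<longrightarrow>
       continuous_on (S \<times> Oset S n) (\<lambda>(z, x). Ifun p \<epsilon> z x)
     \<and> (\<forall>x\<in>Oset S n. \<forall>z\<in>S. \<forall>z'\<in>S. z \<noteq> z' \<longrightarrow>
           \<bar>Ifun p \<epsilon> z x - Ifun p \<epsilon> z' x\<bar> \<le> C * dist z z' powr min \<epsilon> 1)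
     \<and> (\<forall>z\<in>S. \<forall>x\<in>Oset S n. \<forall>x'\<in>Oset S n. x \<noteq> x' \<longrightarrow>
           \<bar>Ifun p \<epsilon> z x - Ifun p \<epsilon> z x'\<bar> \<le> C * dist x x')
     \<and> (\<forall>z\<in>S. \<forall>x\<in>Oset S n. \<bar>Ifun p \<epsilon> z x\<bar> \<le> C)"
proof -
  note p = assms(1,2) and e = assms(3,4) and n = assms(5) and ka = assms(6)
  define K where "K = max 1 \<kappa>"
  define D where "D = DD p n"
  have K1: "1 \<le> K" and Kk: "\<kappa> \<le> K" by (auto simp: K_def)
  have D0: "0 \<le> D" using DD_nonneg[OF p(1)] by (simp add: D_def)
  have n0: "0 < real n" using n by simp
  have K34: "K^3 \<le> K^4" using K1 by (intro power_increasing) auto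
  have K4: "1 \<le> K^4" using K1 by simp
  define C where "C = 20 * D * K^4"
  have C0: "0 \<le> C" using D0 K1 by (simp add: C_def)
  show ?thesis
  proof (intro exI[of _ C] allI impI)
    fix S :: "'a set"
    assume hS: "closed S \<and> cball 0 (1 / \<kappa>) \<subseteq> convex hull (S \<union> {0}) \<and> convex hull (S \<union> {0}) \<subseteq> cball 0 \<kappa>"
    let ?H = "convex hull (S \<union> {0})"
    let ?O = "Oset S n"
    have nz: "norm z \<le> K" if "z \<in> S" for z
    proof -
      have "z \<in> ?H" using that hull_subset[of "S \<union> {0}" convex] by (meson Un_iff subsetD)
      then have "z \<in> cball 0 \<kappa>" using hS by (meson subsetD)
      then have "norm z \<le> \<kappa>" by simp
      then show ?thesis using Kk by linarith
    qed
    have u: "1 / real n \<le> 1 + inner x z" if "x \<in> ?O" "z \<in> S" for x z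
      using that unfolding Oset_def by auto
    have nx: "norm x \<le> K" if x: "x \<in> ?O" for x
    proof (cases "x = 0")
      case True then show ?thesis using K1 by simp
    next
      case False
      have hw: "?H \<subseteq> {w. inner x w \<ge> -1 + 1 / real n}"
      proof (rule hull_minimal)
        show "S \<union> {0} \<subseteq> {w. inner x w \<ge> -1 + 1 / real n}"
          using x n0 n unfolding Oset_def by auto
        show "convex {w. inner x w \<ge> -1 + 1 / real n}" by (rule convex_halfspace_ge)
      qed
      define w where "w = (- (1 / (\<kappa> * norm x))) *\<^sub>R x"
      have "norm w = 1 / \<kappa>" using False ka by (simp add: w_def)
      then have "w \<in> cball 0 (1 / \<kappa>)" by simp
      then have "w \<in> ?H" using hS by (meson subsetD)
      then have "inner x w \<ge> -1 + 1 / real n" using hw by auto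
      moreover have "inner x w = - (norm x / \<kappa>)"
        using False ka by (simp add: w_def inner_commute power2_norm_eq_inner[symmetric] power2_eq_square)
      moreover have "0 \<le> 1 / real n" by simp
      ultimately have "norm x / \<kappa> \<le> 1" by linarith
      then have "norm x \<le> \<kappa>" using ka by (simp add: divide_le_eq)
      then show ?thesis using Kk by linarith
    qed
    have zh: "\<bar>Ifun p \<epsilon> z x - Ifun p \<epsilon> z' x\<bar> \<le> C * dist z z' powr min \<epsilon> 1"
      if "x \<in> ?O" "z \<in> S" "z' \<in> S" for x z z'
    proof -
      have "\<bar>Ifun p \<epsilon> z x - Ifun p \<epsilon> z' x\<bar> \<le> 19 * D * K^4 * dist z z' powr min \<epsilon> 1"
        unfolding D_def by (rule Ifun_zholder) (use p e n K1 that in \<open>simp_all add: nx nz u\<close>)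
      also have "\<dots> \<le> C * dist z z' powr min \<epsilon> 1"
        unfolding C_def using D0 K4 by (intro mult_right_mono) auto
      finally show ?thesis .
    qed
    have xh: "\<bar>Ifun p \<epsilon> z x - Ifun p \<epsilon> z x'\<bar> \<le> C * dist x x'"
      if "z \<in> S" "x \<in> ?O" "x' \<in> ?O" for x x' z
    proof -
      have "\<bar>Ifun p \<epsilon> z x - Ifun p \<epsilon> z x'\<bar> \<le> D * K^3 * dist x x'"
        unfolding D_def by (rule Ifun_xlip) (use p e n K1 that in \<open>simp_all add: nx nz u\<close>)
      also have "\<dots> \<le> C * dist x x'"
      proof -
        have "D * K^3 \<le> C" unfolding C_def using D0 K34 K4
          by (smt (verit) mult_left_mono mult_right_mono)
        then show ?thesis by (intro mult_right_mono) auto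
      qed
      finally show ?thesis .
    qed
    have bh: "\<bar>Ifun p \<epsilon> z x\<bar> \<le> C" if "z \<in> S" "x \<in> ?O" for x z
    proof -
      have "\<bar>Ifun p \<epsilon> z x\<bar> \<le> D * K^4"
        unfolding D_def by (rule Ifun_bound) (use p e n K1 that in \<open>simp_all add: nx nz u\<close>)
      also have "\<dots> \<le> C" unfolding C_def using D0 K4 by simp
      finally show ?thesis .
    qed
    have cont: "continuous_on (S \<times> ?O) (\<lambda>(z, x). Ifun p \<epsilon> z x)"
      by (rule cont_from_bounds[where C = C and \<alpha> = "min \<epsilon> 1"]) (use C0 e in \<open>simp_all add: zh xh\<close>)
    show "continuous_on (S \<times> ?O) (\<lambda>(z, x). Ifun p \<epsilon> z x)
     \<and> (\<forall>x\<in>?O. \<forall>z\<in>S. \<forall>z'\<in>S. z \<noteq> z' \<longrightarrow>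
           \<bar>Ifun p \<epsilon> z x - Ifun p \<epsilon> z' x\<bar> \<le> C * dist z z' powr min \<epsilon> 1)
     \<and> (\<forall>z\<in>S. \<forall>x\<in>?O. \<forall>x'\<in>?O. x \<noteq> x' \<longrightarrow>
           \<bar>Ifun p \<epsilon> z x - Ifun p \<epsilon> z x'\<bar> \<le> C * dist x x')
     \<and> (\<forall>z\<in>S. \<forall>x\<in>?O. \<bar>Ifun p \<epsilon> z x\<bar> \<le> C)"
      using cont zh xh bh by (intro conjI ballI impI) auto
  qed
qed

end
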